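(* Let $(\alpha_n)_{n\in\mathbb{N}^+}$ be a sequence in $(0,1)$ converging to $\alpha$, with continued fraction expansions $\alpha_n=[0;a_{n1},a_{n2},\dots]$ and $\alpha=[0;a_1,a_2,\dots]$, and write $\alpha_n=[0;a_{n1},\dots,a_{ni},r_{ni}]$. Suppose that for some $i\in\mathbb{N}^+$ the numbers $a_{n1},\dots,a_{ni}$ ($n\in\mathbb{N}^+$) are bounded. If $(r_{ni})_n$ is not bounded away from $1$ or not bounded away from $\infty$, then $\alpha$ terminates, i.e. $\alpha=[0;a_1,\dots,a_j]$ for some $j\le i$. Moreover, if $a_{n1}\to\infty$ as $n\to\infty$, then $\alpha=0$.
   Context: Continued fraction conventions: $[a_0;a_1,\dots,a_n]$ denotes $a_0+1/(a_1+1/(a_2+\cdots+1/a_n))$ with $a_0\in\mathbb{Z}$, $a_k\in\mathbb{N}^+$ for $1\le k<n$, and last element $a_n>1$. Every real number is identified with its unique continued fraction; a terminating expansion is also written as $[a_0;a_1,\dots,a_n,0,0,\dots]$, with $[a_0;0,0,\dots]=a_0$. For $\alpha=[a_0;a_1,a_2,\dots]$ and $i\ge1$, $\alpha=[a_0;a_1,\dots,a_i,r_i]$ where $r_i:=a_{i+1}+[0;a_{i+2},a_{i+3},\dots]$. *)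

theory Defs
  imports Complex_Main
begin

text \<open>Then a_k = floor (cf_rem x k) is the k-th partial
  quotient (a_k = 0 for all k beyond a terminating expansion, matching the
  convention [a_0;a_1,...,a_n,0,0,...]), and the complete quotient
  r_i = a_(i+1) + [0;a_(i+2),...] equals cf_rem x (i+1).\<close>

fun cf_rem :: "real \<Rightarrow> nat \<Rightarrow> real" where
  "cf_rem x 0 = x"
| "cf_rem x (Suc k) = (if frac (cf_rem x k) = 0 then 0 else 1 / frac (cf_rem x k))"

definition cf_digit :: "real \<Rightarrow> nat \<Rightarrow> int" where
  "cf_digit x k = \<lfloor>cf_rem x k\<rfloor>"

definition cf_tail :: "real \<Rightarrow> nat \<Rightarrow> real" where
  "cf_tail x i = cf_rem x (Suc i)"

end

theory Submission
  imports Defs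
begin

lemma cf_rem_Suc_inv: "cf_rem x (Suc k) = inverse (frac (cf_rem x k))"
  by (simp add: divide_inverse)

lemma cf_rem_1: "cf_rem x 1 = inverse (frac x)"
  by (simp only: One_nat_def cf_rem.simps(1) cf_rem_Suc_inv)

lemma cf_rem_shift: "cf_rem x (Suc k) = cf_rem (cf_rem x 1) k"
  by (induction k) (simp_all only: One_nat_def cf_rem.simps(1) cf_rem_Suc_inv)

lemma cf_rem_zero: "cf_rem x k = 0 \<Longrightarrow> cf_rem x (k + m) = 0"
  by (induction m) auto

lemma cf_rem_gt1: "cf_rem x (Suc k) = 0 \<or> cf_rem x (Suc k) > 1"
proof -
  have "frac (cf_rem x k) < 1" "frac (cf_rem x k) \<ge> 0" by (auto simp: frac_lt_1)
  then show ?thesis by (auto simp: divide_inverse[symmetric] field_simps)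
qed

lemma isCont_eps:
  fixes f :: "real \<Rightarrow> real"
  assumes "isCont f a" "e > 0"
  shows "\<exists>d>0. \<forall>x. \<bar>x - a\<bar> < d \<longrightarrow> \<bar>f x - f a\<bar> < e"
proof -
  from assms(1)[unfolded isCont_def LIM_eq] assms(2)
  obtain s where "s > 0" "\<forall>x. x \<noteq> a \<and> norm (x - a) < s \<longrightarrow> norm (f x - f a) < e" by blast
  then show ?thesis using assms(2) by (metis abs_eq_0 diff_self real_norm_def)
qed

lemma isCont_invfrac:
  assumes "frac (a::real) \<noteq> 0"
  shows "isCont (\<lambda>x. inverse (frac x)) a"
proof -
  have "a \<notin> \<int>" using assms by (simp add: frac_eq_0_iff)
  then have "isCont frac a" by (rule continuous_frac)
  then show ?thesis using assms by (intro continuous_intros)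
qed

lemma key:
  assumes "\<forall>\<delta>>0. \<exists>x. \<bar>x - a\<bar> < \<delta> \<and> ((1 < cf_rem x (Suc k) \<and> cf_rem x (Suc k) < 1 + \<delta>) \<or> cf_rem x (Suc k) > 1 / \<delta>)"
  shows "cf_rem a (Suc k) = 0"
  using assms
proof (induction k arbitrary: a)
  case 0
  show ?case
  proof (rule ccontr)
    assume nz: "cf_rem a (Suc 0) \<noteq> 0"
    then have fa: "frac a \<noteq> 0" by auto
    define b where "b = inverse (frac a)"
    have "cf_rem a (Suc 0) = b" by (simp only: b_def cf_rem_Suc_inv cf_rem.simps(1))
    then have b1: "b > 1" using nz cf_rem_gt1[of a 0] by simp
    define e where "e = min ((b - 1) / 2) 1"
    have e: "e > 0" using b1 by (simp add: e_def)
    obtain d where d: "d > 0" "\<forall>x. \<bar>x - a\<bar> < d \<longrightarrow> \<bar>inverse (frac x) - b\<bar> < e"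
      using isCont_eps[OF isCont_invfrac[OF fa] e] b_def by auto
    define \<delta> where "\<delta> = min d (min e (1 / (b + 1)))"
    have \<delta>: "\<delta> > 0" using d e b1 by (simp add: \<delta>_def)
    obtain x where x: "\<bar>x - a\<bar> < \<delta>" and
      p: "(1 < cf_rem x (Suc 0) \<and> cf_rem x (Suc 0) < 1 + \<delta>) \<or> cf_rem x (Suc 0) > 1 / \<delta>"
      using "0.prems" \<delta> by blast
    have "\<bar>inverse (frac x) - b\<bar> < e" using d x by (simp add: \<delta>_def)
    moreover have "cf_rem x (Suc 0) = inverse (frac x)" using cf_rem_1[of x] by simp
    moreover have "\<delta> \<le> e" "\<delta> \<le> 1 / (b + 1)" by (auto simp: \<delta>_def)
    moreover have "1 / \<delta> \<ge> b + 1"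
      using \<open>\<delta> \<le> 1 / (b + 1)\<close> \<delta> b1 by (simp add: field_simps)
    moreover have "e \<le> (b - 1) / 2" "e \<le> 1" unfolding e_def by (rule min.cobounded1, rule min.cobounded2)
    ultimately show False using p by auto
  qed
next
  case (Suc k)
  show ?case
  proof (cases "frac a = 0")
    case True
    then have "cf_rem a 1 = 0" by simp
    from cf_rem_zero[OF this, of "Suc k"] show ?thesis by simp
  next
    case fa: False
    define b where "b = cf_rem a 1"
    have bdef: "b = inverse (frac a)" by (simp only: b_def cf_rem_1)
    have "\<forall>\<delta>>0. \<exists>y. \<bar>y - b\<bar> < \<delta> \<and> ((1 < cf_rem y (Suc k) \<and> cf_rem y (Suc k) < 1 + \<delta>) \<or> cf_rem y (Suc k) > 1 / \<delta>)"
    proof (intro allI impI)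
      fix \<delta> :: real assume \<delta>: "\<delta> > 0"
      obtain d where d: "d > 0" "\<forall>x. \<bar>x - a\<bar> < d \<longrightarrow> \<bar>inverse (frac x) - b\<bar> < \<delta>"
        using isCont_eps[OF isCont_invfrac[OF fa] \<delta>] bdef by auto
      define \<delta>' where "\<delta>' = min d \<delta>"
      have \<delta>': "\<delta>' > 0" "\<delta>' \<le> \<delta>" "\<delta>' \<le> d" using d \<delta> by (auto simp: \<delta>'_def)
      obtain x where x: "\<bar>x - a\<bar> < \<delta>'" and
        p: "(1 < cf_rem x (Suc (Suc k)) \<and> cf_rem x (Suc (Suc k)) < 1 + \<delta>') \<or> cf_rem x (Suc (Suc k)) > 1 / \<delta>'"
        using Suc.prems \<delta>'(1) by blast
      have sh: "cf_rem x (Suc (Suc k)) = cf_rem (cf_rem x 1) (Suc k)" by (rule cf_rem_shift)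
      have y: "cf_rem x 1 = inverse (frac x)" by (rule cf_rem_1)
      have "1 / \<delta>' \<ge> 1 / \<delta>" using \<delta>' by (simp add: frac_le)
      then show "\<exists>y. \<bar>y - b\<bar> < \<delta> \<and> ((1 < cf_rem y (Suc k) \<and> cf_rem y (Suc k) < 1 + \<delta>) \<or> cf_rem y (Suc k) > 1 / \<delta>)"
        using d x \<delta>' p sh y
        by (intro exI[of _ "cf_rem x 1"]) auto
    qed
    from Suc.IH[OF this] have "cf_rem b (Suc k) = 0" .
    then show ?thesis using cf_rem_shift[of a "Suc k"] b_def by simp
  qed
qed


theorem lemma3:
  fixes \<alpha> :: "nat \<Rightarrow> real" and a :: real and i :: nat
  assumes range: "\<And>n. n \<ge> 1 \<Longrightarrow> 0 < \<alpha> n \<and> \<alpha> n < 1"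
    and conv: "\<alpha> \<longlonglongrightarrow> a"
  shows "(i \<ge> 1
          \<and> (\<exists>B. \<forall>n\<ge>1. \<forall>k\<in>{1..i}. cf_digit (\<alpha> n) k \<le> B)
          \<and> ((\<forall>\<epsilon>>0. \<exists>n\<ge>1. \<bar>cf_tail (\<alpha> n) i - 1\<bar> < \<epsilon>)
             \<or> (\<forall>M. \<exists>n\<ge>1. cf_tail (\<alpha> n) i > M))
          \<longrightarrow> (\<exists>j\<le>i. \<forall>k>j. cf_digit a k = 0))
       \<and> (filterlim (\<lambda>n. real_of_int (cf_digit (\<alpha> n) 1)) at_top sequentially \<longrightarrow> a = 0)"
proof (intro conjI impI)
  assume H: "i \<ge> 1
          \<and> (\<exists>B. \<forall>n\<ge>1. \<forall>k\<in>{1..i}. cf_digit (\<alpha> n) k \<le> B)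
          \<and> ((\<forall>\<epsilon>>0. \<exists>n\<ge>1. \<bar>cf_tail (\<alpha> n) i - 1\<bar> < \<epsilon>)
             \<or> (\<forall>M. \<exists>n\<ge>1. cf_tail (\<alpha> n) i > M))"
  define r where "r n = cf_rem (\<alpha> n) (Suc i)" for n
  have rt: "cf_tail (\<alpha> n) i = r n" for n by (simp add: r_def cf_tail_def)
  have r01: "r n = 0 \<or> r n > 1" for n unfolding r_def by (rule cf_rem_gt1)
  have "\<forall>\<delta>>0. \<exists>x. \<bar>x - a\<bar> < \<delta> \<and> ((1 < cf_rem x (Suc i) \<and> cf_rem x (Suc i) < 1 + \<delta>) \<or> cf_rem x (Suc i) > 1 / \<delta>)"
  proof (intro allI impI)
    fix \<delta> :: real assume \<delta>: "\<delta> > 0"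
    obtain N where N: "\<forall>n\<ge>N. \<bar>\<alpha> n - a\<bar> < \<delta>"
      using conv \<delta> unfolding LIMSEQ_iff by (metis real_norm_def)
    have "\<exists>n\<ge>N. (1 < r n \<and> r n < 1 + \<delta>) \<or> r n > 1 / \<delta>"
    proof (cases "\<forall>\<epsilon>>0. \<exists>n\<ge>1. \<bar>cf_tail (\<alpha> n) i - 1\<bar> < \<epsilon>")
      case True
      show ?thesis
      proof (rule ccontr)
        assume nn: "\<not> ?thesis"
        define S where "S = (\<lambda>n. r n - 1) ` {n. n < N \<and> r n > 1}"
        have fS: "finite S" by (simp add: S_def)
        define \<epsilon> where "\<epsilon> = Min (insert \<delta> (insert 1 S))"
        have fin: "finite (insert \<delta> (insert 1 S))" using fS by simp
        have Spos: "\<forall>s\<in>S. s > 0" by (auto simp: S_def)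
        have \<epsilon>pos: "\<epsilon> > 0" unfolding \<epsilon>_def using fin Spos \<delta> by (subst Min_gr_iff) auto
        have \<epsilon>le: "\<epsilon> \<le> \<delta>" "\<epsilon> \<le> 1" "\<forall>s\<in>S. \<epsilon> \<le> s" unfolding \<epsilon>_def using fin by (auto intro!: Min_le simp del: Min_insert)
        obtain n where n: "n \<ge> 1" "\<bar>r n - 1\<bar> < \<epsilon>" using True \<epsilon>pos rt by metis
        have "r n \<noteq> 0" using n \<epsilon>le by auto
        then have rn1: "r n > 1" using r01 by blast
        have rnd: "r n < 1 + \<delta>" using n \<epsilon>le by auto
        show False
        proof (cases "n < N")
          case True
          then have "r n - 1 \<in> S" using rn1 by (auto simp: S_def)
          then show False using \<epsilon>le n by fastforce
        next
          case False
          then show False using nn rn1 rnd by auto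
        qed
      qed
    next
      case False
      then have C2: "\<forall>M. \<exists>n\<ge>1. r n > M" using H rt by auto
      define M where "M = max (1 / \<delta>) (Max (r ` {..<N}))"
      obtain n where n: "n \<ge> 1" "r n > M" using C2 by blast
      have "n \<ge> N"
      proof (rule ccontr)
        assume "\<not> n \<ge> N"
        then have "r n \<le> Max (r ` {..<N})" by (intro Max_ge) auto
        then show False using n by (simp add: M_def)
      qed
      then show ?thesis using n by (auto simp: M_def)
    qed
    then obtain n where "n \<ge> N" "(1 < r n \<and> r n < 1 + \<delta>) \<or> r n > 1 / \<delta>" by blast
    then show "\<exists>x. \<bar>x - a\<bar> < \<delta> \<and> ((1 < cf_rem x (Suc i) \<and> cf_rem x (Suc i) < 1 + \<delta>) \<or> cf_rem x (Suc i) > 1 / \<delta>)"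
      using N by (intro exI[of _ "\<alpha> n"]) (auto simp: r_def)
  qed
  from key[OF this] have z: "cf_rem a (Suc i) = 0" .
  show "\<exists>j\<le>i. \<forall>k>j. cf_digit a k = 0"
  proof (intro exI[of _ i] conjI allI impI)
    fix k assume "k > i"
    then have "k = Suc i + (k - Suc i)" by simp
    then have "cf_rem a k = 0" using cf_rem_zero[OF z, of "k - Suc i"] by simp
    then show "cf_digit a k = 0" by (simp add: cf_digit_def)
  qed simp
next
  assume L: "filterlim (\<lambda>n. real_of_int (cf_digit (\<alpha> n) 1)) at_top sequentially"
  have ev: "eventually (\<lambda>n. real_of_int (cf_digit (\<alpha> n) 1) \<le> inverse (\<alpha> n)) sequentially"
    unfolding eventually_sequentially
  proof (intro exI[of _ 1] allI impI)
    fix n :: nat assume "n \<ge> 1"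
    then have "0 < \<alpha> n" "\<alpha> n < 1" using range by auto
    then have "frac (\<alpha> n) = \<alpha> n" by (simp add: frac_eq)
    then show "real_of_int (cf_digit (\<alpha> n) 1) \<le> inverse (\<alpha> n)"
      by (simp add: cf_digit_def cf_rem_1) (metis inverse_eq_divide of_int_floor_le)
  qed
  have "filterlim (\<lambda>n. inverse (\<alpha> n)) at_top sequentially"
    by (rule filterlim_at_top_mono[OF L ev])
  from tendsto_inverse_0_at_top[OF this] have "\<alpha> \<longlonglongrightarrow> 0" by simp
  then show "a = 0" using conv LIMSEQ_unique by blast
qed

end
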